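(* For every $e\ge1$, the subgroup $\hat G^{(e)}\subseteq\mathrm{Aut}(X_{PGL_2(F)})$ is weakly two-transitive: for any vertices $x_1,x_2,y_1,y_2$ with $d(x_1,x_2)=d(y_1,y_2)$ there exists $g\in \hat G^{(e)}$ with $g(x_1)=y_1$ and $g(x_2)=y_2$.
   Context: Let $F$ be a non-archimedean local field with ring of integers $\mathfrak{o}$, uniformizer $\varpi$, and finite residue field of cardinality $q$. $X=X_{PGL_2(F)}$ is the Bruhat–Tits tree of $PGL_2(F)$: its vertices are homothety classes $[L]$ (under $F^\times$) of $\mathfrak{o}$-lattices $L\subset F^2$, and $[L],[L']$ are joined by an edge iff there are representatives with $\varpi L\subsetneq L'\subsetneq L$; it is a $(q+1)$-regular tree. $d$ is the path-length distance on vertices; $\mathrm{Aut}(X)$ is the group of distance-preserving bijections of the vertex set, with the topology of pointwise convergence. $GL_2(F)$ acts on lattices through its linear action on $F^2$, the centre acts trivially, and this gives an embedding $PGL_2(F)\hookrightarrow\mathrm{Aut}(X)$. For an edge $\eta=\{x_1,x_2\}$ and $e\ge1$, $B(\eta,e)=\{y: \min(d(y,x_1),d(y,x_2))\le e\}$. Define $\hat G^{(e)}=\{g\in\mathrm{Aut}(X):\ \text{for every edge }\eta\ \text{there is } g'\in PGL_2(F)\text{ with } g|_{B(\eta,e)}=g'|_{B(\eta,e)}\}$. *)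

theory Defs
  imports Main
begin

text \<open>A valuation v on the nonzero elements of a field (the value at 0 is irrelevant).\<close>
definition discrete_valuation :: "('a::field \<Rightarrow> int) \<Rightarrow> bool" where
  "discrete_valuation v \<longleftrightarrow>
     (\<forall>x y. x \<noteq> 0 \<longrightarrow> y \<noteq> 0 \<longrightarrow> v (x * y) = v x + v y) \<and>
     (\<forall>x y. x \<noteq> 0 \<longrightarrow> y \<noteq> 0 \<longrightarrow> x + y \<noteq> 0 \<longrightarrow> v (x + y) \<ge> min (v x) (v y)) \<and>
     (\<forall>n. \<exists>x. x \<noteq> 0 \<and> v x = n)"

definition val_ring :: "('a::field \<Rightarrow> int) \<Rightarrow> 'a set" where
  "val_ring v = {x. x = 0 \<or> v x \<ge> 0}"

definition val_complete :: "('a::field \<Rightarrow> int) \<Rightarrow> bool" where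
  "val_complete v \<longleftrightarrow>
     (\<forall>X :: nat \<Rightarrow> 'a.
        (\<forall>N::int. \<exists>M. \<forall>m\<ge>M. \<forall>n\<ge>M. X m = X n \<or> v (X m - X n) \<ge> N) \<longrightarrow>
        (\<exists>l. \<forall>N::int. \<exists>M. \<forall>n\<ge>M. X n = l \<or> v (X n - l) \<ge> N))"

text \<open>Residue field o/m, as the quotient of o by congruence modulo the maximal ideal.\<close>
definition residue_rel :: "('a::field \<Rightarrow> int) \<Rightarrow> ('a \<times> 'a) set" where
  "residue_rel v = {(x, y). x \<in> val_ring v \<and> y \<in> val_ring v \<and> (x = y \<or> v (x - y) > 0)}"

definition nonarch_local_field :: "('a::field \<Rightarrow> int) \<Rightarrow> bool" where
  "nonarch_local_field v \<longleftrightarrow>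
     discrete_valuation v \<and> val_complete v \<and> finite (val_ring v // residue_rel v)"

definition is_lattice :: "('a::field \<Rightarrow> int) \<Rightarrow> ('a \<times> 'a) set \<Rightarrow> bool" where
  "is_lattice v L \<longleftrightarrow>
     (\<exists>u1 u2 w1 w2. u1 * w2 - u2 * w1 \<noteq> 0 \<and>
        L = {(a * u1 + b * w1, a * u2 + b * w2) | a b. a \<in> val_ring v \<and> b \<in> val_ring v})"

definition scale_lat :: "'a::field \<Rightarrow> ('a \<times> 'a) set \<Rightarrow> ('a \<times> 'a) set" where
  "scale_lat c L = (\<lambda>(x, y). (c * x, c * y)) ` L"

definition lat_class :: "('a::field \<Rightarrow> int) \<Rightarrow> ('a \<times> 'a) set \<Rightarrow> ('a \<times> 'a) set set" where
  "lat_class v L = {scale_lat c L | c. c \<noteq> 0}"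

definition BT_vertices :: "('a::field \<Rightarrow> int) \<Rightarrow> ('a \<times> 'a) set set set" where
  "BT_vertices v = {lat_class v L | L. is_lattice v L}"

definition BT_adj :: "('a::field \<Rightarrow> int) \<Rightarrow> ('a \<times> 'a) set set \<Rightarrow> ('a \<times> 'a) set set \<Rightarrow> bool" where
  "BT_adj v x y \<longleftrightarrow> x \<in> BT_vertices v \<and> y \<in> BT_vertices v \<and>
     (\<exists>L \<in> x. \<exists>L' \<in> y. \<exists>p. p \<noteq> 0 \<and> v p = 1 \<and> scale_lat p L \<subset> L' \<and> L' \<subset> L)"

definition BT_dist :: "('a::field \<Rightarrow> int) \<Rightarrow> ('a \<times> 'a) set set \<Rightarrow> ('a \<times> 'a) set set \<Rightarrow> nat" where
  "BT_dist v x y = (LEAST n. \<exists>f :: nat \<Rightarrow> ('a \<times> 'a) set set.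
       f 0 = x \<and> f n = y \<and> (\<forall>i<n. BT_adj v (f i) (f (Suc i))))"

definition BT_Aut :: "('a::field \<Rightarrow> int) \<Rightarrow> (('a \<times> 'a) set set \<Rightarrow> ('a \<times> 'a) set set) set" where
  "BT_Aut v = {g. bij_betw g (BT_vertices v) (BT_vertices v) \<and>
     (\<forall>x \<in> BT_vertices v. \<forall>y \<in> BT_vertices v. BT_dist v (g x) (g y) = BT_dist v x y)}"

text \<open>A 2x2 matrix (a, b, c, d) = [[a, b], [c, d]].\<close>
type_synonym 'a mat2 = "'a \<times> 'a \<times> 'a \<times> 'a"

definition mat2_det :: "'a::field mat2 \<Rightarrow> 'a" where
  "mat2_det M = (case M of (a, b, c, d) \<Rightarrow> a * d - b * c)"

definition mat2_apply :: "'a::field mat2 \<Rightarrow> 'a \<times> 'a \<Rightarrow> 'a \<times> 'a" where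
  "mat2_apply M z = (case M of (a, b, c, d) \<Rightarrow> case z of (x, y) \<Rightarrow> (a * x + b * y, c * x + d * y))"

definition GL2_act_vertex :: "'a::field mat2 \<Rightarrow> ('a \<times> 'a) set set \<Rightarrow> ('a \<times> 'a) set set" where
  "GL2_act_vertex M x = (\<lambda>L. mat2_apply M ` L) ` x"

definition edge_ball :: "('a::field \<Rightarrow> int) \<Rightarrow> ('a \<times> 'a) set set \<Rightarrow> ('a \<times> 'a) set set \<Rightarrow> nat
    \<Rightarrow> ('a \<times> 'a) set set set" where
  "edge_ball v x1 x2 e = {y \<in> BT_vertices v. min (BT_dist v y x1) (BT_dist v y x2) \<le> e}"

definition G_hat :: "('a::field \<Rightarrow> int) \<Rightarrow> nat \<Rightarrow> (('a \<times> 'a) set set \<Rightarrow> ('a \<times> 'a) set set) set" where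
  "G_hat v e = {g \<in> BT_Aut v. \<forall>x1 x2. BT_adj v x1 x2 \<longrightarrow>
     (\<exists>M. mat2_det M \<noteq> 0 \<and> (\<forall>y \<in> edge_ball v x1 x2 e. g y = GL2_act_vertex M y))}"

end

theory Submission
  imports Defs
begin


definition vge :: "('a::field \<Rightarrow> int) \<Rightarrow> int \<Rightarrow> 'a \<Rightarrow> bool" where
  "vge v k x \<longleftrightarrow> x = 0 \<or> k \<le> v x"

context fixes v :: "'a::field \<Rightarrow> int" assumes dv: "discrete_valuation v"
begin

lemma v_mult: "x \<noteq> 0 \<Longrightarrow> y \<noteq> 0 \<Longrightarrow> v (x*y) = v x + v y"
  using dv unfolding discrete_valuation_def by blast

lemma v_add: "x \<noteq> 0 \<Longrightarrow> y \<noteq> 0 \<Longrightarrow> x + y \<noteq> 0 \<Longrightarrow> min (v x) (v y) \<le> v (x+y)"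
  using dv unfolding discrete_valuation_def by blast

lemma v_surj: "\<exists>x. x \<noteq> 0 \<and> v x = n"
  using dv unfolding discrete_valuation_def by blast

lemma v_one: "v 1 = 0"
  using v_mult[of 1 1] by simp

lemma v_inv: "x \<noteq> 0 \<Longrightarrow> v (inverse x) = - v x"
  using v_mult[of x "inverse x"] v_one by simp

lemma v_divide: "x \<noteq> 0 \<Longrightarrow> y \<noteq> 0 \<Longrightarrow> v (x / y) = v x - v y"
  by (simp add: divide_inverse v_mult v_inv)

lemma v_neg1: "v (-1) = 0"
  using v_mult[of "-1" "-1"] v_one by simp

lemma v_neg: "v (- x) = v x"
proof (cases "x = 0")
  case False thus ?thesis using v_mult[of "-1" x] v_neg1 by simp
qed simp

lemma v_power: "x \<noteq> 0 \<Longrightarrow> v (x ^ n) = int n * v x"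
  by (induction n) (auto simp: v_one v_mult algebra_simps)

lemma vge_0[simp]: "vge v k 0" by (simp add: vge_def)

lemma vge_add: "vge v k x \<Longrightarrow> vge v k y \<Longrightarrow> vge v k (x + y)"
  unfolding vge_def
proof (elim disjE)
  assume "k \<le> v x" "k \<le> v y"
  thus "x + y = 0 \<or> k \<le> v (x + y)"
    by (cases "x = 0"; cases "y = 0"; cases "x + y = 0") (use v_add[of x y] in auto)
qed auto

lemma vge_neg: "vge v k x \<Longrightarrow> vge v k (- x)"
  by (simp add: vge_def v_neg)

lemma vge_diff: "vge v k x \<Longrightarrow> vge v k y \<Longrightarrow> vge v k (x - y)"
  using vge_add[of k x "-y"] vge_neg[of k y] by simp

lemma vge_mult: "vge v k1 x \<Longrightarrow> vge v k2 y \<Longrightarrow> vge v (k1 + k2) (x * y)"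
  unfolding vge_def by (cases "x = 0"; cases "y = 0") (auto simp: v_mult)

lemma vge_mono: "vge v k x \<Longrightarrow> k' \<le> k \<Longrightarrow> vge v k' x"
  by (auto simp: vge_def)

lemma vge_iff: "x \<noteq> 0 \<Longrightarrow> vge v k x \<longleftrightarrow> k \<le> v x"
  by (simp add: vge_def)

lemma val_ring_vge: "val_ring v = {x. vge v 0 x}"
  by (auto simp: val_ring_def vge_def)

end


definition mmul :: "'a::field mat2 \<Rightarrow> 'a mat2 \<Rightarrow> 'a mat2" where
  "mmul X Y = (case X of (a,b,c,d) \<Rightarrow> case Y of (e,f,g,h) \<Rightarrow>
     (a*e+b*g, a*f+b*h, c*e+d*g, c*f+d*h))"

definition adj :: "'a::field mat2 \<Rightarrow> 'a mat2" where
  "adj X = (case X of (a,b,c,d) \<Rightarrow> (d, -b, -c, a))"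

definition smul0 :: "'a::field \<Rightarrow> 'a mat2 \<Rightarrow> 'a mat2" where
  "smul0 k X = (case X of (a,b,c,d) \<Rightarrow> (k*a, k*b, k*c, k*d))"

definition minv :: "'a::field mat2 \<Rightarrow> 'a mat2" where
  "minv X = smul0 (inverse (mat2_det X)) (adj X)"

definition smul :: "'a::field \<Rightarrow> 'a mat2 \<Rightarrow> 'a mat2" where
  "smul k X = (case X of (a,b,c,d) \<Rightarrow> (k*a, k*b, k*c, k*d))"

definition I2 :: "'a::field mat2" where "I2 = (1,0,0,1)"

lemma mmul_simp[simp]: "mmul (a,b,c,d) (e,f,g,h) = (a*e+b*g, a*f+b*h, c*e+d*g, c*f+d*h)"
  by (simp add: mmul_def)
lemma minv_simp[simp]: "minv (a,b,c,d) =
     (inverse (a*d-b*c)*d, inverse (a*d-b*c)*(-b), inverse (a*d-b*c)*(-c), inverse (a*d-b*c)*a)"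
  by (simp add: minv_def adj_def smul0_def mat2_det_def)
lemma smul_simp[simp]: "smul k (a,b,c,d) = (k*a, k*b, k*c, k*d)"
  by (simp add: smul_def)
lemma det_simp[simp]: "mat2_det (a,b,c,d) = a*d-b*c"
  by (simp add: mat2_det_def)
lemma apply_simp[simp]: "mat2_apply (a,b,c,d) (x,y) = (a*x+b*y, c*x+d*y)"
  by (simp add: mat2_apply_def)

lemma mmul_assoc: "mmul (mmul X Y) Z = mmul X (mmul Y Z)"
  by (cases X rule: prod_cases4; cases Y rule: prod_cases4; cases Z rule: prod_cases4)
     (simp add: algebra_simps)

lemma mmul_I_left[simp]: "mmul I2 X = X"
  by (cases X rule: prod_cases4) (simp add: I2_def)
lemma mmul_I_right[simp]: "mmul X I2 = X"
  by (cases X rule: prod_cases4) (simp add: I2_def)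
lemma det_I[simp]: "mat2_det (I2::'a::field mat2) = 1" by (simp add: I2_def)

lemma det_mmul: "mat2_det (mmul X Y) = mat2_det X * mat2_det Y"
  by (cases X rule: prod_cases4; cases Y rule: prod_cases4) (simp add: algebra_simps)

lemma det_smul: "mat2_det (smul k X) = k*k * mat2_det X"
  by (cases X rule: prod_cases4) (simp add: algebra_simps)


lemma det_minv: "mat2_det X \<noteq> 0 \<Longrightarrow> mat2_det (minv X) = inverse (mat2_det X)"
proof (cases X rule: prod_cases4)
  case (fields a b c d)
  assume "mat2_det X \<noteq> 0"
  then have D: "a*d-b*c \<noteq> 0" using fields by simp
  have "inverse (a*d-b*c) * d * (inverse (a*d-b*c) * a) - inverse (a*d-b*c) * (-b) * (inverse (a*d-b*c) * (-c))
     = inverse (a*d-b*c) * (inverse (a*d-b*c) * (a*d-b*c))" by (simp add: algebra_simps)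
  also have "\<dots> = inverse (a*d-b*c)" using D by simp
  finally show ?thesis using fields by simp
qed

lemma minv_left: "mat2_det X \<noteq> 0 \<Longrightarrow> mmul (minv X) X = I2"
proof (cases X rule: prod_cases4)
  case (fields a b c d)
  assume "mat2_det X \<noteq> 0"
  then have D: "a*d-b*c \<noteq> 0" using fields by simp
  have e1: "inverse (a*d-b*c) * d * a + inverse (a*d-b*c) * (-b) * c = 1"
    proof -
      have "inverse (a*d-b*c) * d * a + inverse (a*d-b*c) * (-b) * c = inverse (a*d-b*c) * (a*d-b*c)" by (simp add: algebra_simps)
      thus ?thesis using D by simp
    qed
  have e2: "inverse (a*d-b*c) * (-c) * b + inverse (a*d-b*c) * a * d = 1"
    proof -
      have "inverse (a*d-b*c) * (-c) * b + inverse (a*d-b*c) * a * d = inverse (a*d-b*c) * (a*d-b*c)" by (simp add: algebra_simps)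
      thus ?thesis using D by simp
    qed
  have e3: "inverse (a*d-b*c) * d * b + inverse (a*d-b*c) * (-b) * d = 0"
    by (simp add: algebra_simps)
  have e4: "inverse (a*d-b*c) * (-c) * a + inverse (a*d-b*c) * a * c = 0"
    by (simp add: algebra_simps)
  show ?thesis using fields e1 e2 e3 e4 by (simp add: I2_def)
qed

lemma minv_right: "mat2_det X \<noteq> 0 \<Longrightarrow> mmul X (minv X) = I2"
proof (cases X rule: prod_cases4)
  case (fields a b c d)
  assume "mat2_det X \<noteq> 0"
  then have D: "a*d-b*c \<noteq> 0" using fields by simp
  have e1: "a * (inverse (a*d-b*c) * d) + b * (inverse (a*d-b*c) * (-c)) = 1"
    proof -
      have "a * (inverse (a*d-b*c) * d) + b * (inverse (a*d-b*c) * (-c)) = inverse (a*d-b*c) * (a*d-b*c)" by (simp add: algebra_simps)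
      thus ?thesis using D by simp
    qed
  have e2: "c * (inverse (a*d-b*c) * (-b)) + d * (inverse (a*d-b*c) * a) = 1"
    proof -
      have "c * (inverse (a*d-b*c) * (-b)) + d * (inverse (a*d-b*c) * a) = inverse (a*d-b*c) * (a*d-b*c)" by (simp add: algebra_simps)
      thus ?thesis using D by simp
    qed
  have e3: "a * (inverse (a*d-b*c) * (-b)) + b * (inverse (a*d-b*c) * a) = 0"
    by (simp add: algebra_simps)
  have e4: "c * (inverse (a*d-b*c) * d) + d * (inverse (a*d-b*c) * (-c)) = 0"
    by (simp add: algebra_simps)
  show ?thesis using fields e1 e2 e3 e4 by (simp add: I2_def)
qed

lemma minv_unique: "mat2_det X \<noteq> 0 \<Longrightarrow> mmul Y X = I2 \<Longrightarrow> Y = minv X"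
proof -
  assume a: "mat2_det X \<noteq> 0" "mmul Y X = I2"
  have "Y = mmul Y (mmul X (minv X))" using minv_right[OF a(1)] by simp
  also have "\<dots> = mmul (mmul Y X) (minv X)" by (simp add: mmul_assoc)
  finally show ?thesis using a(2) by simp
qed


lemma apply_mmul: "mat2_apply (mmul X Y) z = mat2_apply X (mat2_apply Y z)"
  by (cases X rule: prod_cases4; cases Y rule: prod_cases4; cases z) (simp add: algebra_simps)

lemma apply_I[simp]: "mat2_apply I2 z = z"
  by (cases z) (simp add: I2_def)

lemma mmul_smul_left: "mmul (smul k X) Y = smul k (mmul X Y)"
  by (cases X rule: prod_cases4; cases Y rule: prod_cases4) (simp add: algebra_simps)
lemma mmul_smul_right: "mmul X (smul k Y) = smul k (mmul X Y)"
  by (cases X rule: prod_cases4; cases Y rule: prod_cases4) (simp add: algebra_simps)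
lemma smul_smul: "smul k (smul l X) = smul (k*l) X"
  by (cases X rule: prod_cases4) (simp add: algebra_simps)
lemma smul_one[simp]: "smul 1 X = X"
  by (cases X rule: prod_cases4) simp

lemma minv_mmul: "mat2_det X \<noteq> 0 \<Longrightarrow> mat2_det Y \<noteq> 0 \<Longrightarrow> minv (mmul X Y) = mmul (minv Y) (minv X)"
proof -
  assume a: "mat2_det X \<noteq> 0" "mat2_det Y \<noteq> 0"
  have "mmul (mmul (minv Y) (minv X)) (mmul X Y) = I2"
    by (simp add: mmul_assoc minv_left[OF a(1)] flip: mmul_assoc[of "minv Y" "minv X" "mmul X Y"] mmul_assoc[of "minv X" X Y])
      (simp add: mmul_assoc minv_left[OF a(2)])
  thus ?thesis using minv_unique[of "mmul X Y"] a by (simp add: det_mmul)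
qed

lemma smul_I_mmul: "smul k X = mmul (smul k I2) X"
  by (cases X rule: prod_cases4) (simp add: I2_def)

lemma minv_minv: "mat2_det X \<noteq> 0 \<Longrightarrow> minv (minv X) = X"
proof -
  assume a: "mat2_det X \<noteq> 0"
  have "mat2_det (minv X) \<noteq> 0" using a by (simp add: det_minv)
  thus ?thesis using minv_unique[of "minv X" X] minv_right[OF a] by simp
qed

lemma apply_minv: "mat2_det X \<noteq> 0 \<Longrightarrow> mat2_apply (minv X) (mat2_apply X z) = z"
  by (simp add: apply_mmul[symmetric] minv_left)
lemma apply_minv2: "mat2_det X \<noteq> 0 \<Longrightarrow> mat2_apply X (mat2_apply (minv X) z) = z"
  by (simp add: apply_mmul[symmetric] minv_right)

lemma inj_apply: "mat2_det X \<noteq> 0 \<Longrightarrow> inj (mat2_apply X)"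
  by (rule injI) (metis apply_minv)



definition geM :: "('a::field \<Rightarrow> int) \<Rightarrow> int \<Rightarrow> 'a mat2 \<Rightarrow> bool" where
  "geM v k X = (case X of (a,b,c,d) \<Rightarrow> vge v k a \<and> vge v k b \<and> vge v k c \<and> vge v k d)"

definition mv :: "('a::field \<Rightarrow> int) \<Rightarrow> 'a mat2 \<Rightarrow> int" where
  "mv v X = (case X of (a,b,c,d) \<Rightarrow> Min (v ` ({a,b,c,d} - {0})))"

definition delta :: "('a::field \<Rightarrow> int) \<Rightarrow> 'a mat2 \<Rightarrow> int" where
  "delta v X = v (mat2_det X) - 2 * mv v X"

definition unimod :: "('a::field \<Rightarrow> int) \<Rightarrow> 'a mat2 \<Rightarrow> bool" where
  "unimod v U \<longleftrightarrow> mat2_det U \<noteq> 0 \<and> geM v 0 U \<and> geM v 0 (minv U)"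

lemma geM_simp[simp]: "geM v k (a,b,c,d) \<longleftrightarrow> vge v k a \<and> vge v k b \<and> vge v k c \<and> vge v k d"
  by (simp add: geM_def)
lemma mv_simp: "mv v (a,b,c,d) = Min (v ` ({a,b,c,d} - {0}))"
  by (simp add: mv_def)

context fixes v :: "'a::field \<Rightarrow> int" assumes dv: "discrete_valuation v"
begin

lemma geM_mmul: "geM v k1 X \<Longrightarrow> geM v k2 Y \<Longrightarrow> geM v (k1+k2) (mmul X Y)"
  by (cases X rule: prod_cases4; cases Y rule: prod_cases4)
     (simp add: vge_add[OF dv] vge_mult[OF dv])

lemma geM_smul: "vge v k1 c \<Longrightarrow> geM v k2 X \<Longrightarrow> geM v (k1+k2) (smul c X)"
  by (cases X rule: prod_cases4) (simp add: vge_mult[OF dv])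

lemma geM_det: "geM v k X \<Longrightarrow> vge v (2*k) (mat2_det X)"
proof (cases X rule: prod_cases4)
  case (fields a b c d)
  assume "geM v k X"
  then have h: "vge v k a" "vge v k b" "vge v k c" "vge v k d" using fields by auto
  have "vge v (k+k) (a*d)" "vge v (k+k) (b*c)"
    by (rule vge_mult[OF dv h(1) h(4)]) (rule vge_mult[OF dv h(2) h(3)])
  then have "vge v (k+k) (a*d - b*c)" by (rule vge_diff[OF dv])
  thus ?thesis using fields by (simp add: mult_2[symmetric])
qed

lemma geM_mono: "geM v k X \<Longrightarrow> k' \<le> k \<Longrightarrow> geM v k' X"
  by (cases X rule: prod_cases4) (auto intro: vge_mono[OF dv])

lemma mv_props:
  assumes "mat2_det X \<noteq> 0"
  shows "geM v k X \<longleftrightarrow> k \<le> mv v X"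
    and "case X of (a,b,c,d) \<Rightarrow> (a \<noteq> 0 \<and> v a = mv v X) \<or> (b \<noteq> 0 \<and> v b = mv v X)
            \<or> (c \<noteq> 0 \<and> v c = mv v X) \<or> (d \<noteq> 0 \<and> v d = mv v X)"
proof -
  obtain a b c d where X: "X = (a,b,c,d)" by (cases X rule: prod_cases4)
  let ?S = "v ` ({a,b,c,d} - {0})"
  have ne: "?S \<noteq> {}" using assms X by auto
  have fin: "finite ?S" by simp
  have m: "mv v X = Min ?S" using X by (simp add: mv_simp)
  have "Min ?S \<in> ?S" using Min_in[OF fin ne] .
  then show "case X of (a,b,c,d) \<Rightarrow> (a \<noteq> 0 \<and> v a = mv v X) \<or> (b \<noteq> 0 \<and> v b = mv v X)
            \<or> (c \<noteq> 0 \<and> v c = mv v X) \<or> (d \<noteq> 0 \<and> v d = mv v X)"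
    using X m by auto
  show "geM v k X \<longleftrightarrow> k \<le> mv v X"
  proof
    assume "geM v k X"
    then have "\<forall>s\<in>?S. k \<le> s" using X by (auto simp: vge_def)
    thus "k \<le> mv v X" using m Min_in[OF fin ne] by auto
  next
    assume k: "k \<le> mv v X"
    have le: "vge v k x" if "x \<in> {a,b,c,d}" for x
    proof (cases "x = 0")
      case False
      then have "v x \<in> ?S" using that by blast
      then have "Min ?S \<le> v x" by (rule Min_le[OF fin])
      thus ?thesis using k m by (simp add: vge_def)
    qed (simp add: vge_def)
    show "geM v k X" using X le by simp
  qed
qed

lemma geM_mv: "mat2_det X \<noteq> 0 \<Longrightarrow> geM v (mv v X) X"
  using mv_props(1) by blast

lemma delta_nonneg: "mat2_det X \<noteq> 0 \<Longrightarrow> 0 \<le> delta v X"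
  using geM_det[OF geM_mv] by (auto simp: delta_def vge_def)

lemma v_det_mmul: "mat2_det X \<noteq> 0 \<Longrightarrow> mat2_det Y \<noteq> 0 \<Longrightarrow>
    v (mat2_det (mmul X Y)) = v (mat2_det X) + v (mat2_det Y)"
  by (simp add: det_mmul v_mult[OF dv])

lemma delta_mult:
  assumes "mat2_det X \<noteq> 0" "mat2_det Y \<noteq> 0"
  shows "delta v (mmul X Y) \<le> delta v X + delta v Y"
proof -
  have dXY: "mat2_det (mmul X Y) \<noteq> 0" using assms by (simp add: det_mmul)
  have "geM v (mv v X + mv v Y) (mmul X Y)"
    using geM_mmul[OF geM_mv geM_mv] assms by blast
  then have "mv v X + mv v Y \<le> mv v (mmul X Y)" using mv_props(1)[OF dXY] by blast
  thus ?thesis using v_det_mmul[OF assms] by (simp add: delta_def)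
qed

lemma delta_absorb:
  assumes "mat2_det Z \<noteq> 0" "mat2_det X \<noteq> 0" "delta v Z \<le> 0" "delta v (minv Z) \<le> 0"
  shows "delta v (mmul Z X) = delta v X" "delta v (mmul X Z) = delta v X"
proof -
  have dZi: "mat2_det (minv Z) \<noteq> 0" using assms by (simp add: det_minv)
  have dZX: "mat2_det (mmul Z X) \<noteq> 0" "mat2_det (mmul X Z) \<noteq> 0" using assms by (simp_all add: det_mmul)
  have "X = mmul (minv Z) (mmul Z X)" by (simp add: mmul_assoc[symmetric] minv_left assms)
  then have "delta v X \<le> delta v (minv Z) + delta v (mmul Z X)"
    using delta_mult[OF dZi dZX(1)] by simp
  moreover have "delta v (mmul Z X) \<le> delta v Z + delta v X" using delta_mult assms by blast
  ultimately show "delta v (mmul Z X) = delta v X" using assms by linarith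
  have "X = mmul (mmul X Z) (minv Z)" by (simp add: mmul_assoc minv_right assms)
  then have "delta v X \<le> delta v (mmul X Z) + delta v (minv Z)"
    using delta_mult[OF dZX(2) dZi] by simp
  moreover have "delta v (mmul X Z) \<le> delta v X + delta v Z" using delta_mult assms by blast
  ultimately show "delta v (mmul X Z) = delta v X" using assms by linarith
qed

lemma unimod_minv: "unimod v U \<Longrightarrow> unimod v (minv U)"
  by (simp add: unimod_def minv_minv det_minv)

lemma unimod_mmul: "unimod v U \<Longrightarrow> unimod v W \<Longrightarrow> unimod v (mmul U W)"
  unfolding unimod_def using geM_mmul[of 0 _ 0] by (auto simp: det_mmul minv_mmul)

lemma unimod_delta: "unimod v U \<Longrightarrow> delta v U \<le> 0"
proof -
  assume u: "unimod v U"
  then have d: "mat2_det U \<noteq> 0" and i: "geM v 0 U" and ii: "geM v 0 (minv U)" by (auto simp: unimod_def)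
  have "vge v 0 (mat2_det U)" using geM_det[OF i] by simp
  then have "0 \<le> v (mat2_det U)" using d by (simp add: vge_def)
  moreover have "vge v 0 (mat2_det (minv U))" using geM_det[OF ii] by simp
  then have "0 \<le> - v (mat2_det U)" using d by (simp add: vge_def det_minv v_inv[OF dv])
  moreover have "0 \<le> mv v U" using mv_props(1)[OF d] i by blast
  ultimately show ?thesis by (simp add: delta_def)
qed

lemma unimod_absorb:
  assumes "unimod v U" "mat2_det X \<noteq> 0"
  shows "delta v (mmul U X) = delta v X" "delta v (mmul X U) = delta v X"
  using delta_absorb[OF _ assms(2) unimod_delta[OF assms(1)] unimod_delta[OF unimod_minv[OF assms(1)]]]
    assms(1) by (auto simp: unimod_def)

lemma delta_smulI: "c \<noteq> 0 \<Longrightarrow> delta v (smul c I2) = 0"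
proof -
  assume c: "c \<noteq> 0"
  have "mv v (smul c I2) = v c" using c by (simp add: I2_def mv_simp insert_Diff_if)
  thus ?thesis using c by (simp add: delta_def I2_def v_mult[OF dv])
qed

lemma smul_absorb:
  assumes "c \<noteq> 0" "mat2_det X \<noteq> 0"
  shows "delta v (smul c X) = delta v X"
proof -
  have mi: "minv (smul c I2) = smul (inverse c) I2" using assms
    by (simp add: I2_def)
  have dz: "mat2_det (smul c I2) \<noteq> 0" using assms by (simp add: det_smul)
  have "delta v (mmul (smul c I2) X) = delta v X"
    by (rule delta_absorb(1)[OF dz assms(2)]) (simp_all add: mi delta_smulI assms)
  thus ?thesis by (simp flip: smul_I_mmul)
qed

end


definition dg :: "'a::field \<Rightarrow> 'a mat2" where "dg t = (1,0,0,t)"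
definition Sw :: "'a::field mat2" where "Sw = (0,1,1,0)"

context fixes v :: "'a::field \<Rightarrow> int" assumes dv: "discrete_valuation v"
begin

lemma vge_zero[simp]: "vge v k 0" by (simp add: vge_def)
lemma vge_one[simp]: "vge v 0 1" by (simp add: vge_def v_one[OF dv])

lemma adj_aux:
  assumes "p \<noteq> 0" "v p = 1" "D \<noteq> 0" "x \<noteq> 0" "vge v 0 (p * (inverse D * x))"
  shows "v D \<le> 1 + v x"
proof -
  have "p * (inverse D * x) \<noteq> 0" using assms by simp
  then have "0 \<le> v (p * (inverse D * x))" using assms(5) by (simp add: vge_def)
  thus ?thesis using assms by (simp add: v_mult[OF dv] v_inv[OF dv])
qed

lemma delta_adj:
  assumes "mat2_det C \<noteq> 0" "geM v 0 C" "geM v 0 (smul p (minv C))" "p \<noteq> 0" "v p = 1"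
  shows "delta v C \<le> 1"
proof (cases C rule: prod_cases4)
  case (fields a b c d)
  let ?D = "a*d - b*c"
  have D: "?D \<noteq> 0" using assms fields by simp
  have m0: "0 \<le> mv v C" using mv_props(1)[OF dv assms(1)] assms(2) by blast
  have g: "vge v 0 (p * (inverse ?D * d))" "vge v 0 (p * (inverse ?D * (-b)))"
          "vge v 0 (p * (inverse ?D * (-c)))" "vge v 0 (p * (inverse ?D * a))"
    using assms(3) fields by auto
  have disj: "(a \<noteq> 0 \<and> v a = mv v C) \<or> (b \<noteq> 0 \<and> v b = mv v C)
            \<or> (c \<noteq> 0 \<and> v c = mv v C) \<or> (d \<noteq> 0 \<and> v d = mv v C)" using mv_props(2)[OF dv assms(1)] fields by simp
  have "v ?D \<le> 1 + mv v C"
    using disj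
  proof (elim disjE conjE, goal_cases)
    case 1 thus ?case using adj_aux[OF assms(4,5) D _ g(4)] by simp
  next
    case 2 thus ?case using adj_aux[OF assms(4,5) D _ g(2)] by (simp add: v_neg[OF dv])
  next
    case 3 thus ?case using adj_aux[OF assms(4,5) D _ g(3)] by (simp add: v_neg[OF dv])
  next
    case 4 thus ?case using adj_aux[OF assms(4,5) D _ g(1)] by simp
  qed
  thus ?thesis using m0 fields by (simp add: delta_def)
qed

lemma vge_div: "a \<noteq> 0 \<Longrightarrow> vge v (v a) c \<Longrightarrow> vge v 0 (c / a)"
  by (cases "c = 0") (auto simp: vge_def v_divide[OF dv])

lemma unimod_lower: "vge v 0 x \<Longrightarrow> unimod v (1,0,x,1)"
  by (simp add: unimod_def vge_neg[OF dv])
lemma unimod_upper: "vge v 0 x \<Longrightarrow> unimod v (1,x,0,1)"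
  by (simp add: unimod_def vge_neg[OF dv])
lemma unimod_Sw: "unimod v Sw"
  by (simp add: unimod_def Sw_def)
lemma Sw_Sw: "mmul Sw Sw = I2" by (simp add: Sw_def I2_def)

lemma smith_a:
  assumes "a \<noteq> 0" "vge v (v a) b" "vge v (v a) c" "vge v (v a) d" "a*d - b*c \<noteq> 0"
  shows "\<exists>c0 P Q t. c0 \<noteq> 0 \<and> unimod v P \<and> unimod v Q \<and> t \<noteq> 0 \<and> 0 \<le> v t \<and>
           (a,b,c,d) = smul c0 (mmul (mmul P (dg t)) Q)"
proof -
  define t where "t = (a*d - b*c) / (a*a)"
  have t0: "t \<noteq> 0" using assms by (simp add: t_def)
  have "vge v (v a + v a) (a*d)" "vge v (v a + v a) (b*c)"
    using vge_mult[OF dv assms(2) assms(3)] vge_mult[OF dv _ assms(4), of "v a" a] assms(1)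
    by (auto simp: vge_def)
  then have "vge v (v a + v a) (a*d - b*c)" by (rule vge_diff[OF dv])
  then have "0 \<le> v t" using assms t0 by (simp add: t_def vge_def v_divide[OF dv] v_mult[OF dv])
  moreover have "(a,b,c,d) = smul a (mmul (mmul (1,0,c/a,1) (dg t)) (1,b/a,0,1))"
    using assms(1) by (simp add: dg_def t_def field_simps)
  ultimately show ?thesis
    using assms t0 unimod_lower[OF vge_div[OF assms(1,3)]] unimod_upper[OF vge_div[OF assms(1,2)]]
    by blast
qed

lemma smith:
  assumes "mat2_det C \<noteq> 0"
  shows "\<exists>c0 P Q t. c0 \<noteq> 0 \<and> unimod v P \<and> unimod v Q \<and> t \<noteq> 0 \<and> 0 \<le> v t \<and>
           C = smul c0 (mmul (mmul P (dg t)) Q)"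
proof (cases C rule: prod_cases4)
  case (fields a b c d)
  have D: "a*d - b*c \<noteq> 0" using assms fields by simp
  have G: "vge v (mv v C) a" "vge v (mv v C) b" "vge v (mv v C) c" "vge v (mv v C) d"
    using geM_mv[OF dv assms] fields by auto
  have USw: "unimod v Sw" by (rule unimod_Sw)
  have disj: "(a \<noteq> 0 \<and> v a = mv v C) \<or> (b \<noteq> 0 \<and> v b = mv v C)
            \<or> (c \<noteq> 0 \<and> v c = mv v C) \<or> (d \<noteq> 0 \<and> v d = mv v C)" using mv_props(2)[OF dv assms(1)] fields by simp
  from disj show ?thesis
  proof (elim disjE conjE, goal_cases)
    case 1
    have "\<exists>c0 P Q t. c0 \<noteq> 0 \<and> unimod v P \<and> unimod v Q \<and> t \<noteq> 0 \<and> 0 \<le> v t \<and>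
           (a,b,c,d) = smul c0 (mmul (mmul P (dg t)) Q)"
      using smith_a[of a b c d] G D 1 by simp
    thus ?case using fields by simp
  next
    case 2
    have D': "b*c - a*d \<noteq> 0" using D by simp
    obtain c0 P Q t where h: "c0 \<noteq> 0" "unimod v P" "unimod v Q" "t \<noteq> 0" "0 \<le> v t"
      "(b,a,d,c) = smul c0 (mmul (mmul P (dg t)) Q)"
      using smith_a[of b a d c] G D' 2 by auto
    have "C = mmul (mmul C Sw) Sw" by (simp add: mmul_assoc Sw_Sw)
    also have "mmul C Sw = (b,a,d,c)" using fields by (simp add: Sw_def)
    finally have "C = smul c0 (mmul (mmul P (dg t)) (mmul Q Sw))"
      using h(6) by (simp add: mmul_smul_left mmul_assoc)
    thus ?case using h unimod_mmul[OF dv h(3) USw] by blast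
  next
    case 3
    have D': "c*b - d*a \<noteq> 0" using D by (simp add: algebra_simps)
    obtain c0 P Q t where h: "c0 \<noteq> 0" "unimod v P" "unimod v Q" "t \<noteq> 0" "0 \<le> v t"
      "(c,d,a,b) = smul c0 (mmul (mmul P (dg t)) Q)"
      using smith_a[of c d a b] G D' 3 by auto
    have "C = mmul Sw (mmul Sw C)" by (simp add: mmul_assoc[symmetric] Sw_Sw)
    also have "mmul Sw C = (c,d,a,b)" using fields by (simp add: Sw_def)
    finally have "C = smul c0 (mmul (mmul (mmul Sw P) (dg t)) Q)"
      using h(6) by (simp add: mmul_smul_right mmul_assoc)
    thus ?case using h unimod_mmul[OF dv USw h(2)] by blast
  next
    case 4
    have D': "d*a - c*b \<noteq> 0" using D by (simp add: algebra_simps)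
    obtain c0 P Q t where h: "c0 \<noteq> 0" "unimod v P" "unimod v Q" "t \<noteq> 0" "0 \<le> v t"
      "(d,c,b,a) = smul c0 (mmul (mmul P (dg t)) Q)"
      using smith_a[of d c b a] G D' 4 by auto
    have "C = mmul Sw (mmul (mmul Sw (mmul C Sw)) Sw)"
      by (simp add: mmul_assoc[symmetric] Sw_Sw) (simp add: mmul_assoc Sw_Sw)
    also have "mmul Sw (mmul C Sw) = (d,c,b,a)" using fields by (simp add: Sw_def)
    finally have "C = smul c0 (mmul (mmul (mmul Sw P) (dg t)) (mmul Q Sw))"
      using h(6) by (simp add: mmul_smul_right mmul_smul_left mmul_assoc)
    thus ?case using h unimod_mmul[OF dv USw h(2)] unimod_mmul[OF dv h(3) USw] by blast
  qed
qed

end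


definition Ov :: "('a::field \<Rightarrow> int) \<Rightarrow> ('a \<times> 'a) set" where
  "Ov v = {(a,b). a \<in> val_ring v \<and> b \<in> val_ring v}"

definition lat :: "('a::field \<Rightarrow> int) \<Rightarrow> 'a mat2 \<Rightarrow> ('a \<times> 'a) set" where
  "lat v A = mat2_apply A ` Ov v"

lemma minv_smul: "c \<noteq> 0 \<Longrightarrow> mat2_det X \<noteq> 0 \<Longrightarrow> minv (smul c X) = smul (inverse c) (minv X)"
proof -
  assume a: "c \<noteq> 0" "mat2_det X \<noteq> 0"
  have "mmul (smul (inverse c) (minv X)) (smul c X) = I2"
    using a by (simp add: mmul_smul_left mmul_smul_right smul_smul minv_left)
  thus ?thesis using minv_unique[of "smul c X"] a by (simp add: det_smul)
qed

lemma is_lattice_iff: "is_lattice v L \<longleftrightarrow> (\<exists>A. mat2_det A \<noteq> 0 \<and> L = lat v A)"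
proof
  assume "is_lattice v L"
  then obtain u1 u2 w1 w2 where h: "u1 * w2 - u2 * w1 \<noteq> 0"
    "L = {(a * u1 + b * w1, a * u2 + b * w2) | a b. a \<in> val_ring v \<and> b \<in> val_ring v}"
    unfolding is_lattice_def by blast
  have "L = lat v (u1,w1,u2,w2)" unfolding h(2) lat_def Ov_def
    by (auto simp: image_def algebra_simps)
  moreover have "mat2_det (u1,w1,u2,w2) \<noteq> 0" using h(1) by (simp add: algebra_simps)
  ultimately show "\<exists>A. mat2_det A \<noteq> 0 \<and> L = lat v A" by blast
next
  assume "\<exists>A. mat2_det A \<noteq> 0 \<and> L = lat v A"
  then obtain u1 w1 u2 w2 where h: "mat2_det (u1,w1,u2,w2) \<noteq> 0" "L = lat v (u1,w1,u2,w2)"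
    by (metis prod_cases4)
  have "L = {(a * u1 + b * w1, a * u2 + b * w2) | a b. a \<in> val_ring v \<and> b \<in> val_ring v}"
    unfolding h(2) lat_def Ov_def by (auto simp: image_def algebra_simps)
  moreover have "u1 * w2 - u2 * w1 \<noteq> 0" using h(1) by (simp add: algebra_simps)
  ultimately show "is_lattice v L" unfolding is_lattice_def by blast
qed

lemma lat_mmul: "mat2_apply M ` lat v A = lat v (mmul M A)"
  by (simp add: lat_def image_image apply_mmul)

lemma scale_lat_lat: "scale_lat c (lat v A) = lat v (smul c A)"
  unfolding scale_lat_def lat_def image_image
  by (intro image_cong refl) (cases A rule: prod_cases4, auto simp: algebra_simps)

lemma vertices_iff: "x \<in> BT_vertices v \<longleftrightarrow> (\<exists>A. mat2_det A \<noteq> 0 \<and> x = lat_class v (lat v A))"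
  unfolding BT_vertices_def is_lattice_iff by blast

lemma lc_lat: "lat_class v (lat v A) = {lat v (smul c A) | c. c \<noteq> 0}"
  unfolding lat_class_def scale_lat_lat by blast

lemma self_mem: "lat v A \<in> lat_class v (lat v A)"
  unfolding lc_lat by (auto intro: exI[of _ 1])

lemma class_smul: "c \<noteq> 0 \<Longrightarrow> lat_class v (lat v (smul c A)) = lat_class v (lat v A)"
  unfolding lc_lat smul_smul
proof (intro set_eqI iffI)
  fix L assume "c \<noteq> 0" "L \<in> {lat v (smul (ca * c) A) |ca. ca \<noteq> 0}"
  thus "L \<in> {lat v (smul ca A) |ca. ca \<noteq> 0}" by auto
next
  fix L assume c: "c \<noteq> 0" and "L \<in> {lat v (smul ca A) |ca. ca \<noteq> 0}"
  then obtain d where d: "d \<noteq> 0" "L = lat v (smul d A)" by blast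
  have "L = lat v (smul ((d / c) * c) A)" using d c by simp
  thus "L \<in> {lat v (smul (ca * c) A) |ca. ca \<noteq> 0}" using d c by fastforce
qed

lemma GL_class: "GL2_act_vertex M (lat_class v (lat v A)) = lat_class v (lat v (mmul M A))"
  unfolding GL2_act_vertex_def lc_lat
proof (intro set_eqI iffI)
  fix L assume "L \<in> (`) (mat2_apply M) ` {lat v (smul c A) |c. c \<noteq> 0}"
  thus "L \<in> {lat v (smul c (mmul M A)) |c. c \<noteq> 0}" by (auto simp: lat_mmul mmul_smul_right)
next
  fix L assume "L \<in> {lat v (smul c (mmul M A)) |c. c \<noteq> 0}"
  then obtain c where c: "c \<noteq> 0" "L = lat v (smul c (mmul M A))" by blast
  then have "L = mat2_apply M ` lat v (smul c A)" by (simp add: lat_mmul mmul_smul_right)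
  thus "L \<in> (`) (mat2_apply M) ` {lat v (smul c A) |c. c \<noteq> 0}" using c by blast
qed

context fixes v :: "'a::field \<Rightarrow> int" assumes dv: "discrete_valuation v"
begin

lemma apply_Ov: "geM v 0 X \<Longrightarrow> w \<in> Ov v \<Longrightarrow> mat2_apply X w \<in> Ov v"
  by (cases X rule: prod_cases4; cases w)
     (auto simp: Ov_def val_ring_vge[OF dv] intro!: vge_add[OF dv, of 0] vge_mult[OF dv, of 0 _ 0, simplified])

lemma Ov_vge: "(x,y) \<in> Ov v \<longleftrightarrow> vge v 0 x \<and> vge v 0 y"
  by (simp add: Ov_def val_ring_vge[OF dv])

lemma lat_sub:
  assumes "mat2_det A \<noteq> 0" "mat2_det B \<noteq> 0"
  shows "lat v A \<subseteq> lat v B \<longleftrightarrow> geM v 0 (mmul (minv B) A)"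
proof
  assume g: "geM v 0 (mmul (minv B) A)"
  show "lat v A \<subseteq> lat v B"
  proof
    fix z assume "z \<in> lat v A"
    then obtain w where w: "w \<in> Ov v" "z = mat2_apply A w" by (auto simp: lat_def)
    have "z = mat2_apply B (mat2_apply (mmul (minv B) A) w)"
      using w assms by (simp add: apply_mmul apply_minv2)
    thus "z \<in> lat v B" using apply_Ov[OF g w(1)] by (auto simp: lat_def)
  qed
next
  assume s: "lat v A \<subseteq> lat v B"
  have one: "(1,0) \<in> Ov v" "(0,1) \<in> Ov v" by (auto simp: Ov_vge vge_def v_one[OF dv])
  have col: "mat2_apply (mmul (minv B) A) w \<in> Ov v" if "w \<in> Ov v" for w
  proof -
    have "mat2_apply A w \<in> lat v B" using s that by (auto simp: lat_def)
    then obtain u where u: "u \<in> Ov v" "mat2_apply A w = mat2_apply B u" by (auto simp: lat_def)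
    thus ?thesis using assms by (simp add: apply_mmul apply_minv)
  qed
  obtain a b c d where X: "mmul (minv B) A = (a,b,c,d)" by (cases "mmul (minv B) A" rule: prod_cases4)
  show "geM v 0 (mmul (minv B) A)"
    using col[OF one(1)] col[OF one(2)] by (simp add: X Ov_vge)
qed

lemma lat_eq_unimod:
  assumes "mat2_det A \<noteq> 0" "mat2_det B \<noteq> 0" "lat v A = lat v B"
  shows "unimod v (mmul (minv B) A)"
proof -
  have "minv (mmul (minv B) A) = mmul (minv A) B"
    using assms by (simp add: minv_mmul det_minv minv_minv)
  thus ?thesis using assms lat_sub[of A B] lat_sub[of B A]
    by (simp add: unimod_def det_mmul det_minv)
qed

lemma lat_unimod:
  assumes "unimod v U" "mat2_det A \<noteq> 0"
  shows "lat v (mmul A U) = lat v A"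
proof -
  have dU: "mat2_det U \<noteq> 0" using assms by (simp add: unimod_def)
  have dAU: "mat2_det (mmul A U) \<noteq> 0" using assms dU by (simp add: det_mmul)
  have e1: "mmul (minv A) (mmul A U) = U" using assms by (simp add: mmul_assoc[symmetric] minv_left)
  have e2: "mmul (minv (mmul A U)) A = minv U" using assms dU
    by (simp add: minv_mmul mmul_assoc minv_left)
  show ?thesis using lat_sub[OF dAU assms(2)] lat_sub[OF assms(2) dAU] e1 e2 assms(1)
    by (auto simp: unimod_def)
qed

lemma class_eq:
  assumes "lat_class v (lat v A) = lat_class v (lat v B)"
  shows "\<exists>c. c \<noteq> 0 \<and> lat v B = lat v (smul c A)"
proof -
  have "lat v B \<in> lat_class v (lat v A)" using self_mem[of v B] assms by simp
  thus ?thesis unfolding lc_lat by blast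
qed

lemma rep_inv:
  assumes "mat2_det A \<noteq> 0" "mat2_det A' \<noteq> 0" "mat2_det B \<noteq> 0" "mat2_det B' \<noteq> 0"
    "lat_class v (lat v A) = lat_class v (lat v A')" "lat_class v (lat v B) = lat_class v (lat v B')"
  shows "delta v (mmul (minv A') B') = delta v (mmul (minv A) B)"
proof -
  obtain c where c: "c \<noteq> 0" "lat v A' = lat v (smul c A)" using class_eq[OF assms(5)] by blast
  obtain d where d: "d \<noteq> 0" "lat v B' = lat v (smul d B)" using class_eq[OF assms(6)] by blast
  have dcA: "mat2_det (smul c A) \<noteq> 0" using c assms by (simp add: det_smul)
  have ddB: "mat2_det (smul d B) \<noteq> 0" using d assms by (simp add: det_smul)
  define U where "U = mmul (minv (smul c A)) A'"
  define W where "W = mmul (minv (smul d B)) B'"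
  have U: "unimod v U" unfolding U_def by (rule lat_eq_unimod[OF assms(2) dcA c(2)])
  have W: "unimod v W" unfolding W_def by (rule lat_eq_unimod[OF assms(4) ddB d(2)])
  have dU: "mat2_det U \<noteq> 0" "mat2_det W \<noteq> 0" using U W by (auto simp: unimod_def)
  have "A' = mmul (smul c A) U" unfolding U_def
    by (simp add: mmul_assoc[symmetric] minv_right dcA)
  then have A': "A' = smul c (mmul A U)" by (simp add: mmul_smul_left)
  have "B' = mmul (smul d B) W" unfolding W_def
    by (simp add: mmul_assoc[symmetric] minv_right ddB)
  then have B': "B' = smul d (mmul B W)" by (simp add: mmul_smul_left)
  have "mmul (minv A') B' = smul (d * inverse c) (mmul (mmul (minv U) (mmul (minv A) B)) W)"
    unfolding A' B' using c d assms dU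
    by (simp add: minv_smul det_mmul minv_mmul mmul_smul_left mmul_smul_right smul_smul mmul_assoc)
  also have "delta v \<dots> = delta v (mmul (minv A) B)"
  proof -
    have dAB: "mat2_det (mmul (minv A) B) \<noteq> 0" using assms by (simp add: det_mmul det_minv)
    have d2: "mat2_det (mmul (minv U) (mmul (minv A) B)) \<noteq> 0" using dAB dU by (simp add: det_mmul det_minv)
    have d3: "mat2_det (mmul (mmul (minv U) (mmul (minv A) B)) W) \<noteq> 0" using d2 dU by (simp add: det_mmul)
    show ?thesis using smul_absorb[OF dv _ d3, of "d * inverse c"] c d
      unimod_absorb(2)[OF dv W d2] unimod_absorb(1)[OF dv unimod_minv[OF dv U] dAB] by simp
  qed
  finally show ?thesis .
qed

end


abbreviation GL where "GL \<equiv> GL2_act_vertex"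

lemma GL_comp: "GL M (GL N x) = GL (mmul M N) x"
  by (simp add: GL2_act_vertex_def image_image apply_mmul)

lemma GL_I: "GL I2 x = x"
  by (simp add: GL2_act_vertex_def)

lemma GL_inv: "mat2_det M \<noteq> 0 \<Longrightarrow> GL (minv M) (GL M x) = x"
  by (simp add: GL_comp minv_left GL_I)
lemma GL_inv2: "mat2_det M \<noteq> 0 \<Longrightarrow> GL M (GL (minv M) x) = x"
  by (simp add: GL_comp minv_right GL_I)

lemma GL_vert: "mat2_det M \<noteq> 0 \<Longrightarrow> x \<in> BT_vertices v \<Longrightarrow> GL M x \<in> BT_vertices v"
proof -
  assume a: "mat2_det M \<noteq> 0" "x \<in> BT_vertices v"
  then obtain A where A: "mat2_det A \<noteq> 0" "x = lat_class v (lat v A)" unfolding vertices_iff by blast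
  have "GL M x = lat_class v (lat v (mmul M A))" using A by (simp add: GL_class)
  moreover have "mat2_det (mmul M A) \<noteq> 0" using a A by (simp add: det_mmul)
  ultimately show ?thesis unfolding vertices_iff by blast
qed

lemma scale_apply: "scale_lat p (mat2_apply M ` L) = mat2_apply M ` scale_lat p L"
  unfolding scale_lat_def image_image
  by (intro image_cong refl) (cases M rule: prod_cases4, auto simp: algebra_simps)

lemma strict_image: "inj f \<Longrightarrow> A \<subset> B \<Longrightarrow> f ` A \<subset> f ` B"
  by (simp add: image_strict_mono inj_on_subset)

lemma GL_adj:
  assumes "mat2_det M \<noteq> 0" "BT_adj v x y"
  shows "BT_adj v (GL M x) (GL M y)"
proof -
  obtain L L' p where h: "L \<in> x" "L' \<in> y" "p \<noteq> 0" "v p = 1" "scale_lat p L \<subset> L'" "L' \<subset> L"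
    using assms(2) unfolding BT_adj_def by blast
  have inj: "inj (mat2_apply M)" by (rule inj_apply[OF assms(1)])
  have "scale_lat p (mat2_apply M ` L) \<subset> mat2_apply M ` L'"
    unfolding scale_apply by (rule strict_image[OF inj h(5)])
  moreover have "mat2_apply M ` L' \<subset> mat2_apply M ` L" by (rule strict_image[OF inj h(6)])
  moreover have "mat2_apply M ` L \<in> GL M x"
    using h(1) unfolding GL2_act_vertex_def by (rule imageI)
  moreover have "mat2_apply M ` L' \<in> GL M y"
    using h(2) unfolding GL2_act_vertex_def by (rule imageI)
  moreover have xy: "x \<in> BT_vertices v" "y \<in> BT_vertices v" using assms(2) unfolding BT_adj_def by auto
  have "GL M x \<in> BT_vertices v" "GL M y \<in> BT_vertices v"
    using GL_vert[OF assms(1) xy(1)] GL_vert[OF assms(1) xy(2)] .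
  ultimately show ?thesis unfolding BT_adj_def using h(3,4) by (intro conjI bexI exI) (assumption+)
qed

lemma GL_path:
  assumes "mat2_det M \<noteq> 0" "f 0 = x" "f n = y" "\<forall>i<n. BT_adj v (f i) (f (Suc i))"
  shows "(GL M \<circ> f) 0 = GL M x \<and> (GL M \<circ> f) n = GL M y \<and>
         (\<forall>i<n. BT_adj v ((GL M \<circ> f) i) ((GL M \<circ> f) (Suc i)))"
  using assms GL_adj[OF assms(1)] by auto

lemma GL_dist:
  assumes "mat2_det M \<noteq> 0"
  shows "BT_dist v (GL M x) (GL M y) = BT_dist v x y"
proof -
  have dM: "mat2_det (minv M) \<noteq> 0" using assms by (simp add: det_minv)
  have "(\<exists>f. f 0 = GL M x \<and> f n = GL M y \<and> (\<forall>i<n. BT_adj v (f i) (f (Suc i)))) \<longleftrightarrow>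
        (\<exists>f. f 0 = x \<and> f n = y \<and> (\<forall>i<n. BT_adj v (f i) (f (Suc i))))" for n
  proof
    assume "\<exists>f. f 0 = GL M x \<and> f n = GL M y \<and> (\<forall>i<n. BT_adj v (f i) (f (Suc i)))"
    then obtain f where "f 0 = GL M x" "f n = GL M y" "\<forall>i<n. BT_adj v (f i) (f (Suc i))" by blast
    note g = GL_path[OF dM this]
    show "\<exists>f. f 0 = x \<and> f n = y \<and> (\<forall>i<n. BT_adj v (f i) (f (Suc i)))"
      apply (rule exI[of _ "GL (minv M) \<circ> f"])
      using g by (simp only: GL_inv[OF assms] simp_thms) (elim conjE)
  next
    assume "\<exists>f. f 0 = x \<and> f n = y \<and> (\<forall>i<n. BT_adj v (f i) (f (Suc i)))"
    then obtain f where "f 0 = x" "f n = y" "\<forall>i<n. BT_adj v (f i) (f (Suc i))" by blast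
    note g = GL_path[OF assms this]
    show "\<exists>f. f 0 = GL M x \<and> f n = GL M y \<and> (\<forall>i<n. BT_adj v (f i) (f (Suc i)))"
      by (rule exI[of _ "GL M \<circ> f"]) (rule g)
  qed
  thus ?thesis unfolding BT_dist_def by simp
qed

lemma GL_Aut:
  assumes "mat2_det M \<noteq> 0"
  shows "GL M \<in> BT_Aut v"
proof -
  have dM: "mat2_det (minv M) \<noteq> 0" using assms by (simp add: det_minv)
  have "bij_betw (GL M) (BT_vertices v) (BT_vertices v)"
  proof (rule bij_betw_byWitness[where f'="GL (minv M)"])
    show "\<forall>a\<in>BT_vertices v. GL (minv M) (GL M a) = a" using GL_inv[OF assms] by blast
    show "\<forall>a\<in>BT_vertices v. GL M (GL (minv M) a) = a" using GL_inv2[OF assms] by blast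
    show "GL M ` BT_vertices v \<subseteq> BT_vertices v" using GL_vert[OF assms] by blast
    show "GL (minv M) ` BT_vertices v \<subseteq> BT_vertices v" using GL_vert[OF dM] by blast
  qed
  thus ?thesis unfolding BT_Aut_def using GL_dist[OF assms] by auto
qed

lemma GL_Ghat:
  assumes "mat2_det M \<noteq> 0"
  shows "GL M \<in> G_hat v e"
  unfolding G_hat_def using GL_Aut[OF assms] assms by blast



context fixes v :: "'a::field \<Rightarrow> int" assumes dv: "discrete_valuation v"
begin

lemma delta_dg: "t \<noteq> 0 \<Longrightarrow> 0 \<le> v t \<Longrightarrow> delta v (dg t) = v t"
proof -
  assume t: "t \<noteq> 0" "0 \<le> v t"
  have "{1, 0, 0, t} - {0} = {1, t}" using t by auto
  then have "v ` ({1, 0, 0, t} - {0}) = {0, v t}" by (simp add: v_one[OF dv])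
  then have "mv v (dg t) = 0" using t by (simp add: dg_def mv_simp)
  thus ?thesis by (simp add: delta_def dg_def)
qed

lemma delta_I: "delta v I2 = 0"
  using delta_dg[of 1] by (simp add: dg_def I2_def v_one[OF dv])

lemma vert_rep: "x \<in> BT_vertices v \<Longrightarrow> L \<in> x \<Longrightarrow>
   \<exists>B. mat2_det B \<noteq> 0 \<and> L = lat v B \<and> x = lat_class v (lat v B)"
proof -
  assume "x \<in> BT_vertices v" "L \<in> x"
  then obtain B0 where B0: "mat2_det B0 \<noteq> 0" "x = lat_class v (lat v B0)" "L \<in> x"
    unfolding vertices_iff by blast
  then obtain c where c: "c \<noteq> 0" "L = lat v (smul c B0)" unfolding lc_lat by blast
  show ?thesis
    using c B0 class_smul[OF c(1), of v B0] by (intro exI[of _ "smul c B0"]) (simp add: det_smul)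
qed

lemma LB:
  assumes dA: "mat2_det A \<noteq> 0" and f0: "f 0 = lat_class v (lat v A)"
  shows "(\<forall>i<n. BT_adj v (f i) (f (Suc i))) \<Longrightarrow> f n = lat_class v (lat v B) \<Longrightarrow> mat2_det B \<noteq> 0
    \<Longrightarrow> delta v (mmul (minv A) B) \<le> int n"
proof (induction n arbitrary: B)
  case 0
  have "delta v (mmul (minv A) B) = delta v (mmul (minv A) A)"
    by (rule rep_inv[OF dv dA dA dA 0(3)]) (use 0 f0 in simp_all)
  thus ?case using dA by (simp add: minv_left delta_I)
next
  case (Suc n)
  have adj: "BT_adj v (f n) (f (Suc n))" using Suc.prems(1) by simp
  then obtain L L' p where h: "L \<in> f n" "L' \<in> f (Suc n)" "p \<noteq> 0" "v p = 1"
    "scale_lat p L \<subset> L'" "L' \<subset> L" and vs: "f n \<in> BT_vertices v" "f (Suc n) \<in> BT_vertices v"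
    unfolding BT_adj_def by blast
  obtain B1 where B1: "mat2_det B1 \<noteq> 0" "L = lat v B1" "f n = lat_class v (lat v B1)"
    using vert_rep[OF vs(1) h(1)] by blast
  obtain B2 where B2: "mat2_det B2 \<noteq> 0" "L' = lat v B2" "f (Suc n) = lat_class v (lat v B2)"
    using vert_rep[OF vs(2) h(2)] by blast
  have IH: "delta v (mmul (minv A) B1) \<le> int n" using Suc.IH Suc.prems(1) B1 by simp
  define C where "C = mmul (minv B1) B2"
  have dC: "mat2_det C \<noteq> 0" using B1 B2 by (simp add: C_def det_mmul det_minv)
  have "lat v B2 \<subseteq> lat v B1" using h(6) B1 B2 by auto
  then have g1: "geM v 0 C" using lat_sub[OF dv B2(1) B1(1)] by (simp add: C_def)
  have dpB1: "mat2_det (smul p B1) \<noteq> 0" using B1 h(3) by (simp add: det_smul)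
  have "lat v (smul p B1) \<subseteq> lat v B2" using h(5) B1 B2 by (auto simp: scale_lat_lat)
  then have "geM v 0 (mmul (minv B2) (smul p B1))"
    using lat_sub[OF dv dpB1 B2(1)] by simp
  moreover have "mmul (minv B2) (smul p B1) = smul p (minv C)"
    using B1 B2 by (simp add: C_def minv_mmul det_minv minv_minv mmul_smul_right)
  ultimately have g2: "geM v 0 (smul p (minv C))" by simp
  have dC1: "delta v C \<le> 1" by (rule delta_adj[OF dv dC g1 g2 h(3) h(4)])
  have dAB1: "mat2_det (mmul (minv A) B1) \<noteq> 0" using dA B1 by (simp add: det_mmul det_minv)
  have "mmul (minv A) B2 = mmul (mmul (minv A) B1) C"
    using B1 by (simp add: C_def mmul_assoc[symmetric]) (simp add: mmul_assoc minv_right)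
  then have "delta v (mmul (minv A) B2) \<le> int (Suc n)"
    using delta_mult[OF dv dAB1 dC] IH dC1 by simp
  moreover have "delta v (mmul (minv A) B) = delta v (mmul (minv A) B2)"
    by (rule rep_inv[OF dv dA dA B2(1) Suc.prems(3)]) (use B2 Suc.prems in simp_all)
  ultimately show ?case by simp
qed

end


context fixes v :: "'a::field \<Rightarrow> int" and p :: 'a
  assumes dv: "discrete_valuation v" and p0: "p \<noteq> 0" and vp: "v p = 1"
begin

lemma not_vge_invp: "\<not> vge v 0 (inverse p)"
  using p0 vp by (simp add: vge_def v_inv[OF dv])

lemma vge_p: "vge v 0 p"
  using vp by (simp add: vge_def)

lemma std_adj:
  assumes q: "q \<noteq> 0"
  shows "BT_adj v (lat_class v (lat v (dg q))) (lat_class v (lat v (dg (p*q))))"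
proof -
  have d1: "mat2_det (dg q) \<noteq> 0" and d2: "mat2_det (dg (p*q)) \<noteq> 0"
    and d3: "mat2_det (smul p (dg q)) \<noteq> 0" using q p0 by (simp_all add: dg_def)
  have e1: "mmul (minv (dg q)) (dg (p*q)) = (1,0,0,p)" using q by (simp add: dg_def)
  have e2: "mmul (minv (dg (p*q))) (dg q) = (1,0,0,inverse p)" using q p0 by (simp add: dg_def field_simps)
  have e3: "mmul (minv (dg (p*q))) (smul p (dg q)) = (p,0,0,1)" using q p0 by (simp add: dg_def field_simps)
  have e4: "mmul (minv (smul p (dg q))) (dg (p*q)) = (inverse p,0,0,1)" using q p0 by (simp add: dg_def field_simps)
  have s1: "lat v (dg (p*q)) \<subset> lat v (dg q)"
    using lat_sub[OF dv d2 d1] lat_sub[OF dv d1 d2] e1 e2 vge_p not_vge_invp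
    by (simp add: vge_one[OF dv] vge_zero[OF dv] psubset_eq)
  have s2: "scale_lat p (lat v (dg q)) \<subset> lat v (dg (p*q))"
    unfolding scale_lat_lat
    using lat_sub[OF dv d3 d2] lat_sub[OF dv d2 d3] e3 e4 vge_p not_vge_invp
    by (simp add: vge_one[OF dv] vge_zero[OF dv] psubset_eq)
  show ?thesis unfolding BT_adj_def vertices_iff
    using s1 s2 d1 d2 self_mem p0 vp by blast
qed

definition std :: "nat \<Rightarrow> ('a \<times> 'a) set set" where
  "std k = lat_class v (lat v (dg (p ^ k)))"

lemma std_path: "\<forall>i<k. BT_adj v (std i) (std (Suc i))"
  unfolding std_def using std_adj p0 by simp

lemma dist_std: "BT_dist v (std 0) (std k) = k"
proof -
  let ?P = "\<lambda>n. \<exists>f. f 0 = std 0 \<and> f n = std k \<and> (\<forall>i<n. BT_adj v (f i) (f (Suc i)))"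
  have Pk: "?P k" using std_path by blast
  have le: "BT_dist v (std 0) (std k) \<le> k" unfolding BT_dist_def by (rule Least_le[of ?P, OF Pk])
  have "?P (BT_dist v (std 0) (std k))" unfolding BT_dist_def by (rule LeastI[of ?P, OF Pk])
  then obtain f where f: "f 0 = std 0" "f (BT_dist v (std 0) (std k)) = std k"
     "\<forall>i<BT_dist v (std 0) (std k). BT_adj v (f i) (f (Suc i))" by blast
  have dI: "mat2_det (I2::'a mat2) \<noteq> 0" by simp
  have dk: "mat2_det (dg (p^k)) \<noteq> 0" using p0 by (simp add: dg_def)
  have "delta v (mmul (minv I2) (dg (p^k))) \<le> int (BT_dist v (std 0) (std k))"
    by (rule LB[OF dv dI _ f(3) _ dk]) (use f in \<open>simp_all add: std_def dg_def I2_def\<close>)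
  moreover have "minv (I2::'a mat2) = I2" by (simp add: I2_def)
  moreover have "delta v (dg (p^k)) = int k"
    using delta_dg[OF dv, of "p^k"] p0 vp by (simp add: v_power[OF dv])
  ultimately show ?thesis using le by simp
qed

end


context fixes v :: "'a::field \<Rightarrow> int" and p :: 'a
  assumes dv: "discrete_valuation v" and p0: "p \<noteq> 0" and vp: "v p = 1"
begin

lemma pair:
  assumes x1: "x1 \<in> BT_vertices v" and x2: "x2 \<in> BT_vertices v"
  shows "\<exists>M. mat2_det M \<noteq> 0 \<and> GL M (std v p 0) = x1 \<and> GL M (std v p (BT_dist v x1 x2)) = x2"
proof -
  obtain A where A: "mat2_det A \<noteq> 0" "x1 = lat_class v (lat v A)" using x1 unfolding vertices_iff by blast
  obtain B where B: "mat2_det B \<noteq> 0" "x2 = lat_class v (lat v B)" using x2 unfolding vertices_iff by blast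
  define C where "C = mmul (minv A) B"
  have dC: "mat2_det C \<noteq> 0" using A B by (simp add: C_def det_mmul det_minv)
  obtain c0 P Q t where s: "c0 \<noteq> 0" "unimod v P" "unimod v Q" "t \<noteq> 0" "0 \<le> v t"
    "C = smul c0 (mmul (mmul P (dg t)) Q)" using smith[OF dv dC] by blast
  define k where "k = nat (v t)"
  have vt: "v t = int k" using s(5) by (simp add: k_def)
  define u where "u = t / p^k"
  have u0: "u \<noteq> 0" using s(4) p0 by (simp add: u_def)
  have vu: "v u = 0" using s(4) p0 vp vt by (simp add: u_def v_divide[OF dv] v_power[OF dv])
  have Uu: "unimod v (dg u)"
    using u0 vu by (simp add: unimod_def dg_def vge_def v_inv[OF dv] v_one[OF dv])
  have dgt: "dg t = mmul (dg (p^k)) (dg u)" using p0 by (simp add: dg_def u_def)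
  define M where "M = mmul A P"
  have dP: "mat2_det P \<noteq> 0" using s(2) by (simp add: unimod_def)
  have dM: "mat2_det M \<noteq> 0" using A dP by (simp add: M_def det_mmul)
  define X where "X = mmul M (dg (p^k))"
  have dX: "mat2_det X \<noteq> 0" using dM p0 by (simp add: X_def det_mmul dg_def)
  define W where "W = mmul (dg u) Q"
  have W: "unimod v W" unfolding W_def by (rule unimod_mmul[OF dv Uu s(3)])
  have "std v p 0 = lat_class v (lat v I2)" by (simp add: std_def[OF dv p0 vp] dg_def I2_def)
  then have "GL M (std v p 0) = lat_class v (lat v (mmul A P))" by (simp add: GL_class M_def)
  then have g0: "GL M (std v p 0) = x1" by (simp add: lat_unimod[OF dv s(2) A(1)] A(2))
  have "B = mmul A C" using A by (simp add: C_def mmul_assoc[symmetric] minv_right)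
  also have "\<dots> = smul c0 (mmul X W)"
    by (simp add: s(6) X_def W_def M_def dgt mmul_smul_right mmul_assoc)
  also have "\<dots> = mmul (smul c0 X) W" by (simp add: mmul_smul_left)
  finally have "lat v B = lat v (smul c0 X)"
    using lat_unimod[OF dv W, of "smul c0 X"] dX s(1) by (simp add: det_smul)
  then have gk: "GL M (std v p k) = x2"
    using B(2) class_smul[OF s(1), of v X] by (simp add: std_def[OF dv p0 vp] GL_class X_def)
  have "BT_dist v x1 x2 = k"
    using GL_dist[OF dM, of v "std v p 0" "std v p k"] g0 gk dist_std[OF dv p0 vp] by simp
  thus ?thesis using g0 gk dM by blast
qed

end

theorem main_aux:
  fixes v :: "'a::field \<Rightarrow> int" and e :: nat
  assumes "nonarch_local_field v" and "e \<ge> 1"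
    and "x1 \<in> BT_vertices v" and "x2 \<in> BT_vertices v"
    and "y1 \<in> BT_vertices v" and "y2 \<in> BT_vertices v"
    and "BT_dist v x1 x2 = BT_dist v y1 y2"
  shows "\<exists>g \<in> G_hat v e. g x1 = y1 \<and> g x2 = y2"
proof -
  have dv: "discrete_valuation v" using assms(1) by (simp add: nonarch_local_field_def)
  obtain p where p: "p \<noteq> 0" "v p = 1" using v_surj[OF dv, of 1] by blast
  obtain M where M: "mat2_det M \<noteq> 0" "GL M (std v p 0) = x1" "GL M (std v p (BT_dist v x1 x2)) = x2"
    using pair[OF dv p assms(3,4)] by blast
  obtain N where N: "mat2_det N \<noteq> 0" "GL N (std v p 0) = y1" "GL N (std v p (BT_dist v y1 y2)) = y2"
    using pair[OF dv p assms(5,6)] by blast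
  define g where "g = GL (mmul N (minv M))"
  have dg: "mat2_det (mmul N (minv M)) \<noteq> 0" using M N by (simp add: det_mmul det_minv)
  have i1: "GL (minv M) x1 = std v p 0" using GL_inv[OF M(1), of "std v p 0"] M(2) by simp
  have i2: "GL (minv M) x2 = std v p (BT_dist v x1 x2)"
    using GL_inv[OF M(1), of "std v p (BT_dist v x1 x2)"] M(3) by simp
  have "g x1 = y1" unfolding g_def GL_comp[symmetric] i1 by (rule N(2))
  moreover have "g x2 = y2" unfolding g_def GL_comp[symmetric] i2 using N(3) assms(7) by simp
  moreover have "g \<in> G_hat v e" unfolding g_def by (rule GL_Ghat[OF dg])
  ultimately show ?thesis by blast
qed

theorem mainTheorem6:
  fixes v :: "'a::field \<Rightarrow> int" and e :: nat
  assumes "nonarch_local_field v" and "e \<ge> 1"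
    and "x1 \<in> BT_vertices v" and "x2 \<in> BT_vertices v"
    and "y1 \<in> BT_vertices v" and "y2 \<in> BT_vertices v"
    and "BT_dist v x1 x2 = BT_dist v y1 y2"
  shows "\<exists>g \<in> G_hat v e. g x1 = y1 \<and> g x2 = y2"
    using main_aux[OF assms] .

end
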